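(* For an integer $d\geqslant 0$ and a real $x>0$, let $K_d(x)$ be the largest integer $k$ such that $(k-d)k\leqslant dx$; equivalently $K_d(x)=\lfloor (d+\sqrt{d^2+4dx})/2\rfloor$ (so $K_0(x)=0$). Then for integers $d$ and reals $x$ with $0\leqslant d\leqslant x$ and $x\geqslant 1$, $$K_{d+1}(x)-K_d(x)=\bigl(\sqrt{d+1}-\sqrt{d}\,\bigr)\sqrt{x}+O(1),$$ with an absolute implied constant.
   Context: $\lfloor t\rfloor$ denotes the integer part of the real number $t$. *)

theory Defs
  imports Complex_Main
begin

definition K :: "nat \<Rightarrow> real \<Rightarrow> int" where
  "K d x = (GREATEST k::int. real_of_int ((k - int d) * k) \<le> real d * x)"

end

theory Submission
  imports Defs
begin

lemma K_floor:
  assumes x: "x \<ge> 0"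
  shows "K d x = \<lfloor>(real d + sqrt ((real d)^2 + 4 * real d * x)) / 2\<rfloor>"
proof -
  define S where "S = sqrt ((real d)^2 + 4 * real d * x)"
  have S0: "S \<ge> 0" unfolding S_def using x by simp
  have S2: "S^2 = (real d)^2 + 4 * real d * x" unfolding S_def using x by simp
  have "(real d)^2 \<le> S^2" using S2 x by simp
  hence Sd: "S \<ge> real d" using S0 power2_le_imp_le by blast
  define r where "r = (real d + S) / 2"
  define r' where "r' = (real d - S) / 2"
  have r0: "r \<ge> 0" "r' \<le> 0" using S0 Sd unfolding r_def r'_def by auto
  have fact: "\<And>k::real. (k - real d) * k - real d * x = (k - r) * (k - r')"
  proof -
    fix k :: real
    have "(k - r) * (k - r') = (4*k*k - 4*k*real d + real d * real d - S * S) / 4"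
      unfolding r_def r'_def by (simp add: field_simps)
    also have "\<dots> = (k - real d) * k - real d * x"
      using S2 by (simp add: power2_eq_square field_simps)
    finally show "(k - real d) * k - real d * x = (k - r) * (k - r')" by simp
  qed
  have P: "real_of_int ((k - int d) * k) \<le> real d * x \<longleftrightarrow> (real_of_int k - r) * (real_of_int k - r') \<le> 0" for k
  proof -
    have "real_of_int ((k - int d) * k) = (real_of_int k - real d) * real_of_int k" by simp
    thus ?thesis using fact[of "real_of_int k"] by linarith
  qed
  have "K d x = \<lfloor>r\<rfloor>"
    unfolding K_def
  proof (rule Greatest_equality)
    have "real_of_int \<lfloor>r\<rfloor> - r \<le> 0" by linarith
    moreover have "real_of_int \<lfloor>r\<rfloor> - r' \<ge> 0"
    proof -
      have "0 \<le> \<lfloor>r\<rfloor>" using r0 by simp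
      thus ?thesis using r0 by linarith
    qed
    ultimately show "real_of_int ((\<lfloor>r\<rfloor> - int d) * \<lfloor>r\<rfloor>) \<le> real d * x"
      using P mult_nonpos_nonneg by blast
  next
    fix k :: int
    assume "real_of_int ((k - int d) * k) \<le> real d * x"
    hence h: "(real_of_int k - r) * (real_of_int k - r') \<le> 0" using P by blast
    show "k \<le> \<lfloor>r\<rfloor>"
    proof (rule ccontr)
      assume "\<not> k \<le> \<lfloor>r\<rfloor>"
      hence "real_of_int k > r" by linarith
      hence "real_of_int k - r > 0" "real_of_int k - r' > 0" using r0 by auto
      hence "(real_of_int k - r) * (real_of_int k - r') > 0" by simp
      thus False using h by simp
    qed
  qed
  thus ?thesis unfolding r_def S_def .
qed

lemma lin_aux:
  fixes a b c e f :: real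
  shows "2*a \<le> 3*b \<Longrightarrow> c \<le> 2*e \<Longrightarrow> 0 \<le> f \<Longrightarrow> 0 \<le> b \<Longrightarrow> 0 \<le> e \<Longrightarrow> a + c \<le> 2*(b + 2*f + 4*e)"
  by (simp add: algebra_simps)

lemma key_bound:
  fixes A B P Q d x :: real
  assumes nn: "A \<ge> 0" "B \<ge> 0" "P \<ge> 0" "Q \<ge> 0"
    and A2: "A^2 = (d+1)^2 + 4*(d+1)*x" and B2: "B^2 = d^2 + 4*d*x"
    and P2: "P^2 = 4*(d+1)*x" and Q2: "Q^2 = 4*d*x"
    and d: "0 \<le> d" "d \<le> x" and x: "1 \<le> x"
  shows "(A - P) - (B - Q) \<le> 2" "(A - P) - (B - Q) \<ge> -2"
proof -
  have "B^2 \<le> A^2" using A2 B2 d x by (simp add: power2_eq_square algebra_simps)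
  hence AB: "B \<le> A" using nn power2_le_imp_le by blast
  have "Q^2 \<le> P^2" using P2 Q2 d x by simp
  hence PQ: "Q \<le> P" using nn power2_le_imp_le by blast
  have "(d+1)^2 \<le> A^2" using A2 d x by simp
  hence Ad: "A \<ge> d + 1" using nn power2_le_imp_le by blast
  have "d^2 \<le> B^2" using B2 d x by simp
  hence Bd: "B \<ge> d" using nn power2_le_imp_le by blast
  have YP: "A + P > 0" using Ad d nn(3) by linarith
  have e1: "(A - P) * (A + P) = (d+1)^2" using A2 P2 by (simp add: algebra_simps power2_eq_square)
  have e2: "(B - Q) * (B + Q) = d^2" using B2 Q2 by (simp add: algebra_simps power2_eq_square)
  have AmP: "A - P = (d+1)^2 / (A + P)" using e1 YP by (simp add: field_simps)
  show "(A - P) - (B - Q) \<le> 2"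
  proof (cases "B + Q = 0")
    case True
    hence "B = 0" "Q = 0" using nn by auto
    hence "d = 0" using Bd d by linarith
    hence "A - P = 1 / (A + P)" using AmP by simp
    moreover have "A + P \<ge> 1" using Ad d nn by linarith
    ultimately have "A - P \<le> 1" by (simp add: divide_le_eq)
    thus ?thesis using \<open>B = 0\<close> \<open>Q = 0\<close> by simp
  next
    case False
    hence X: "B + Q > 0" using nn by linarith
    have BmQ: "B - Q = d^2 / (B + Q)" using e2 X by (simp add: field_simps)
    have "d^2 / (A + P) \<le> d^2 / (B + Q)"
      using X AB PQ by (intro divide_left_mono) auto
    hence "(A - P) - (B - Q) \<le> ((d+1)^2 - d^2) / (A + P)"
      using AmP BmQ by (simp add: diff_divide_distrib)
    also have "\<dots> = (2*d+1) / (A + P)" by (simp add: power2_eq_square algebra_simps)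
    also have "\<dots> \<le> 2"
      using YP Ad d nn by (simp add: divide_le_eq)
    finally show ?thesis .
  qed
  show "(A - P) - (B - Q) \<ge> -2"
  proof (cases "d = 0")
    case True
    hence "B = 0" "Q = 0" using B2 Q2 nn by auto
    thus ?thesis using AmP YP by (simp add: zero_le_divide_iff) (smt (verit) divide_nonneg_pos zero_le_power2)
  next
    case False
    hence dp: "d > 0" using d by simp
    have Bp: "B > 0" using Bd dp by linarith
    have X: "B + Q > 0" using Bp nn by linarith
    have BmQ: "B - Q = d^2 / (B + Q)" using e2 X by (simp add: field_simps)
    have eAB: "(A - B) * (A + B) = 2*d + 1 + 4*x" using A2 B2
      by (simp add: algebra_simps power2_eq_square)
    have "(A - B) * (2*B) \<le> (A - B) * (A + B)" using AB by (intro mult_left_mono) auto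
    hence s1: "(A - B) * (2*B) \<le> 2*d + 1 + 4*x" using eAB by simp
    have "d^2 * ((A - B) * (2*B)) \<le> d^2 * (2*d + 1 + 4*x)" using s1 by (intro mult_left_mono) auto
    also have "\<dots> \<le> 3 * (d^2 * (d + 4*x))"
    proof -
      have "d*d*1 \<le> d*d*(8*x)" using d x by (intro mult_left_mono) auto
      moreover have "d*d*d \<ge> 0" using d by simp
      ultimately show ?thesis by (simp add: algebra_simps power2_eq_square)
    qed
    also have "d^2 * (d + 4*x) = d * B^2" using B2 by (simp add: algebra_simps power2_eq_square)
    also have "3 * (d * B^2) \<le> 3 * (B * B^2)" using Bd by (intro mult_left_mono mult_right_mono) auto
    finally have "B * (2 * (d^2 * (A - B))) \<le> B * (3 * B^2)" by (simp add: algebra_simps)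
    hence t1: "2 * (d^2 * (A - B)) \<le> 3 * B^2" using Bp by simp
    have ePQ: "(P - Q) * (P + Q) = 4 * x" using P2 Q2 by (simp add: algebra_simps power2_eq_square)
    have "(P - Q) * P \<le> (P - Q) * (P + Q)" using PQ nn by (intro mult_left_mono) auto
    hence "(P - Q) * P \<le> 4 * x" using ePQ by simp
    have P2d: "P \<ge> 2 * d"
    proof -
      have "d*d \<le> d*x" using d by (intro mult_left_mono) auto
      hence "(2*d)^2 \<le> P^2" using P2 d by (simp add: power2_eq_square algebra_simps)
      thus ?thesis using nn power2_le_imp_le by blast
    qed
    have "(P - Q) * (2 * d) \<le> (P - Q) * P" using P2d PQ by (intro mult_left_mono) auto
    hence "(P - Q) * (2 * d) \<le> 4 * x" using \<open>(P - Q) * P \<le> 4 * x\<close> by linarith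
    hence "d * ((P - Q) * (2 * d)) \<le> d * (4 * x)" using d by (intro mult_left_mono) auto
    hence t2: "d^2 * (P - Q) \<le> 2 * d * x" by (simp add: power2_eq_square algebra_simps)
    have BQ: "B * Q \<ge> 0" using nn by simp
    have t3: "d^2 * ((A + P) - (B + Q)) \<le> 2 * (B + Q)^2"
    proof -
      have "B^2 \<ge> 0" "d*x \<ge> 0" using d x by auto
      have e: "d^2 * ((A + P) - (B + Q)) = d^2 * (A - B) + d^2 * (P - Q)" by (simp add: algebra_simps)
      have f: "(B + Q)^2 = B^2 + 2*(B*Q) + Q^2" by (simp add: power2_eq_square algebra_simps)
      have g: "2*d*x = 2*(d*x)" "4*d*x = 4*(d*x)" by simp_all
      show ?thesis unfolding e f Q2 g using t1 t2[unfolded g] BQ \<open>B^2 \<ge> 0\<close> \<open>d*x \<ge> 0\<close> by (rule lin_aux)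
    qed
    have "d^2 / (A + P) \<le> (A - P)"
    proof -
      have "d^2 \<le> (d+1)^2" using d by (simp add: power2_eq_square algebra_simps)
      thus ?thesis using AmP YP by (simp add: divide_right_mono)
    qed
    hence "(B - Q) - (A - P) \<le> d^2 / (B + Q) - d^2 / (A + P)" using BmQ by simp
    also have "\<dots> = d^2 * ((A + P) - (B + Q)) / ((B + Q) * (A + P))"
      using X YP by (simp add: field_simps)
    also have "\<dots> \<le> 2 * (B + Q)^2 / ((B + Q) * (A + P))"
      using t3 X YP by (intro divide_right_mono) auto
    also have "\<dots> = ((B + Q) * (2 * (B + Q))) / ((B + Q) * (A + P))"
      by (simp add: power2_eq_square)
    also have "\<dots> = 2 * (B + Q) / (A + P)" using X
      by (rule nonzero_mult_divide_mult_cancel_left[OF less_imp_neq[symmetric]])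
    also have "\<dots> \<le> 2" using AB PQ X YP by (simp add: divide_le_eq)
    finally show ?thesis by simp
  qed
qed

theorem proposition2:
  "\<exists>C::real. \<forall>(d::nat) (x::real). real d \<le> x \<and> 1 \<le> x \<longrightarrow>
     \<bar>real_of_int (K (d + 1) x - K d x) - (sqrt (real d + 1) - sqrt (real d)) * sqrt x\<bar> \<le> C"
proof (intro exI allI impI)
  fix d :: nat and x :: real
  assume h: "real d \<le> x \<and> 1 \<le> x"
  hence x0: "x \<ge> 0" and dx: "real d \<le> x" and x1: "1 \<le> x" by auto
  define A where "A = sqrt ((real (d+1))^2 + 4 * real (d+1) * x)"
  define B where "B = sqrt ((real d)^2 + 4 * real d * x)"
  define P where "P = 2 * (sqrt (real d + 1) * sqrt x)"
  define Q where "Q = 2 * (sqrt (real d) * sqrt x)"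
  have K1: "K (d+1) x = \<lfloor>(real (d+1) + A) / 2\<rfloor>" unfolding A_def using K_floor x0 by blast
  have K0: "K d x = \<lfloor>(real d + B) / 2\<rfloor>" unfolding B_def using K_floor x0 by blast
  have A2: "A^2 = (real d+1)^2 + 4*(real d+1)*x" unfolding A_def using x0 by (simp add: algebra_simps)
  have B2: "B^2 = (real d)^2 + 4*(real d)*x" unfolding B_def using x0 by simp
  have P2: "P^2 = 4*(real d+1)*x" unfolding P_def using x0 by (simp add: power_mult_distrib)
  have Q2: "Q^2 = 4*(real d)*x" unfolding Q_def using x0 by (simp add: power_mult_distrib)
  have nn: "A \<ge> 0" "B \<ge> 0" "P \<ge> 0" "Q \<ge> 0" unfolding A_def B_def P_def Q_def using x0 by auto
  have kb: "(A - P) - (B - Q) \<le> 2" "(A - P) - (B - Q) \<ge> -2"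
    using key_bound[OF nn A2 B2 P2 Q2 _ dx x1] by auto
  have eq: "(sqrt (real d + 1) - sqrt (real d)) * sqrt x = (P - Q) / 2"
    unfolding P_def Q_def by (simp add: algebra_simps)
  define r1 where "r1 = (real (d+1) + A) / 2"
  define r0 where "r0 = (real d + B) / 2"
  have f1: "r1 - 1 < real_of_int \<lfloor>r1\<rfloor>" "real_of_int \<lfloor>r1\<rfloor> \<le> r1" by linarith+
  have f0: "r0 - 1 < real_of_int \<lfloor>r0\<rfloor>" "real_of_int \<lfloor>r0\<rfloor> \<le> r0" by linarith+
  define Z where "Z = r1 - r0 - (P - Q) / 2"
  have "Z = 1/2 + ((A - P) - (B - Q)) / 2"
    unfolding Z_def r1_def r0_def by (simp add: field_simps)
  hence Z2: "2 * Z = 1 + ((A - P) - (B - Q))" by simp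
  have Zb1: "Z \<le> 3/2" using Z2 kb(1) by linarith
  have Zb2: "Z \<ge> -1/2" using Z2 kb(2) by linarith
  note Zb = Zb1 Zb2
  hence "\<bar>real_of_int (\<lfloor>r1\<rfloor> - \<lfloor>r0\<rfloor>) - (P - Q) / 2\<bar> \<le> 3"
    using f1 f0 Zb unfolding abs_le_iff of_int_diff Z_def by linarith
  thus "\<bar>real_of_int (K (d + 1) x - K d x) - (sqrt (real d + 1) - sqrt (real d)) * sqrt x\<bar> \<le> 3"
    unfolding K1 K0 eq unfolding r1_def[symmetric] r0_def[symmetric] .
qed

end
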